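(* Let $R$ be a finite group of squarefree order. If $R$ is abelian of composite order, or $R\cong \mathrm{D}_{2r}\times\mathrm{C}_q$ with $r\in\{3,5\}$ and $q$ a prime, then $R$ is not DRR-detecting.
   Context: $\mathrm{C}_n$ is the cyclic group of order $n$, $\mathrm{D}_{2n}$ the dihedral group of order $2n$. For a group $R$ and $S\subseteq R$, the Cayley digraph $\mathrm{Cay}(R,S)$ has vertex set $R$ and an arc from $r$ to $sr$ whenever $s\in S$. It is a DRR if $\mathrm{Aut}(\mathrm{Cay}(R,S))$ equals the right regular representation $\hat R$. $\mathrm{Aut}(R)_S$ is the group of automorphisms of $R$ fixing $S$ setwise. $R$ is DRR-detecting if for every $S\subseteq R$, $\mathrm{Aut}(R)_S=1$ implies $\mathrm{Cay}(R,S)$ is a DRR. *)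

theory Defs
  imports "HOL-Algebra.Algebra" "HOL-Computational_Algebra.Squarefree"
begin

definition cyclic_group :: "nat \<Rightarrow> int monoid" where
  "cyclic_group n = integer_mod_group n"

text \<open>Dihedral group of order 2n: pairs (a,i) with a in Z/n, i in Z/2, representing
  rotation^a reflection^i, with (a,i)(b,j) = (a + (-1)^i b, i + j).\<close>
definition dihedral_group :: "nat \<Rightarrow> (int \<times> int) monoid" where
  "dihedral_group n =
     \<lparr>carrier = {0..<int n} \<times> {0..<2},
      monoid.mult = (\<lambda>(a,i) (b,j). ((a + (-1)^nat i * b) mod int n, (i + j) mod 2)),
      one = (0, 0)\<rparr>"

text \<open>Automorphisms of the Cayley digraph Cay(R,S): permutations of the vertex set R
  (extensional) preserving arcs r \<rightarrow> s r (s \<in> S) in both directions.\<close>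
definition cay_aut :: "('a, 'b) monoid_scheme \<Rightarrow> 'a set \<Rightarrow> ('a \<Rightarrow> 'a) set" where
  "cay_aut R S = {f \<in> Bij (carrier R).
      \<forall>x\<in>carrier R. \<forall>y\<in>carrier R.
        ((\<exists>s\<in>S. y = s \<otimes>\<^bsub>R\<^esub> x) \<longleftrightarrow> (\<exists>s\<in>S. f y = s \<otimes>\<^bsub>R\<^esub> f x))}"

definition right_regular :: "('a, 'b) monoid_scheme \<Rightarrow> ('a \<Rightarrow> 'a) set" where
  "right_regular R = {(\<lambda>x\<in>carrier R. x \<otimes>\<^bsub>R\<^esub> g) | g. g \<in> carrier R}"

definition is_DRR :: "('a, 'b) monoid_scheme \<Rightarrow> 'a set \<Rightarrow> bool" where
  "is_DRR R S \<longleftrightarrow> cay_aut R S = right_regular R"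

definition aut_stab :: "('a, 'b) monoid_scheme \<Rightarrow> 'a set \<Rightarrow> ('a \<Rightarrow> 'a) set" where
  "aut_stab R S = {\<phi> \<in> auto R. \<phi> ` S = S}"

definition DRR_detecting :: "('a, 'b) monoid_scheme \<Rightarrow> bool" where
  "DRR_detecting R \<longleftrightarrow>
     (\<forall>S. S \<subseteq> carrier R \<longrightarrow> aut_stab R S = {(\<lambda>x\<in>carrier R. x)} \<longrightarrow> is_DRR R S)"

end

theory Submission
  imports Defs
begin

lemma (in group) arc_iff:
  assumes "x \<in> carrier G" "y \<in> carrier G" "S \<subseteq> carrier G"
  shows "(\<exists>s\<in>S. y = s \<otimes> x) \<longleftrightarrow> y \<otimes> inv x \<in> S"
proof
  assume "\<exists>s\<in>S. y = s \<otimes> x"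
  then obtain s where s: "s \<in> S" "y = s \<otimes> x" by blast
  have "y \<otimes> inv x = s" using s assms by (simp add: m_assoc subsetD)
  then show "y \<otimes> inv x \<in> S" using s by simp
next
  assume "y \<otimes> inv x \<in> S"
  moreover have "y = (y \<otimes> inv x) \<otimes> x" using assms by (simp add: m_assoc)
  ultimately show "\<exists>s\<in>S. y = s \<otimes> x" by blast
qed

lemma (in group) not_DRR_central:
  assumes N: "subgroup N G"
    and cen: "\<And>n x. n \<in> N \<Longrightarrow> x \<in> carrier G \<Longrightarrow> n \<otimes> x = x \<otimes> n"
    and x0: "x0 \<in> carrier G" "x0 \<notin> N"
    and t: "t \<in> N" "t \<noteq> \<one>"
    and S: "S \<subseteq> carrier G"
    and clos: "\<And>s. s \<in> S \<Longrightarrow> s \<notin> N \<Longrightarrow> s \<otimes> t \<in> S \<and> s \<otimes> inv t \<in> S"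
  shows "\<not> is_DRR G S"
proof -
  interpret N: subgroup N G by fact
  have tc: "t \<in> carrier G" using t by auto
  have itN: "inv t \<in> N" using t by auto
  have itc: "inv t \<in> carrier G" using tc by auto
  define C where "C = {x \<in> carrier G. x \<otimes> inv x0 \<in> N}"
  define f where "f = (\<lambda>x\<in>carrier G. if x \<in> C then x \<otimes> t else x)"
  define f' where "f' = (\<lambda>x\<in>carrier G. if x \<in> C then x \<otimes> inv t else x)"
  have Ct: "x \<otimes> t \<in> C" if "x \<in> C" for x
  proof -
    have xc: "x \<in> carrier G" using that C_def by auto
    have "x \<otimes> t \<otimes> inv x0 = (x \<otimes> inv x0) \<otimes> t"
      using xc tc x0 cen[OF t(1), of "inv x0"] by (simp add: m_assoc)
    then show ?thesis using that C_def xc tc t N.m_closed by auto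
  qed
  have Cit: "x \<otimes> inv t \<in> C" if "x \<in> C" for x
  proof -
    have xc: "x \<in> carrier G" using that C_def by auto
    have "x \<otimes> inv t \<otimes> inv x0 = (x \<otimes> inv x0) \<otimes> inv t"
      using xc itc x0 cen[OF itN, of "inv x0"] by (simp add: m_assoc)
    then show ?thesis using that C_def xc itc itN N.m_closed by auto
  qed
  have fc: "f x \<in> carrier G" if "x \<in> carrier G" for x using that tc by (simp add: f_def)
  have f'c: "f' x \<in> carrier G" if "x \<in> carrier G" for x using that itc by (simp add: f'_def)
  have ff': "f' (f x) = x" if "x \<in> carrier G" for x
    using that Ct tc itc by (auto simp: f_def f'_def m_assoc)
  have f'f: "f (f' x) = x" if "x \<in> carrier G" for x
    using that Cit tc itc by (auto simp: f_def f'_def m_assoc)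
  have bij: "f \<in> Bij (carrier G)"
    unfolding Bij_def
  proof
    show "f \<in> extensional (carrier G)" by (simp add: f_def)
    have "bij_betw f (carrier G) (carrier G)"
      by (rule bij_betw_byWitness[where f'=f']) (use ff' f'f fc f'c in auto)
    then show "f \<in> {f. bij_betw f (carrier G) (carrier G)}" by simp
  qed
  have notN: "y \<otimes> inv x \<notin> N" if "x \<in> C" "y \<in> carrier G" "y \<notin> C" for x y
  proof
    assume yx: "y \<otimes> inv x \<in> N"
    have xc: "x \<in> carrier G" using that C_def by auto
    have "(y \<otimes> inv x) \<otimes> (x \<otimes> inv x0) \<in> N" using yx that(1) C_def N.m_closed by auto
    moreover have "(y \<otimes> inv x) \<otimes> (x \<otimes> inv x0) = y \<otimes> inv x0"
      using xc that x0 by (simp add: m_assoc[symmetric]) (simp add: m_assoc)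
    ultimately show False using that C_def by auto
  qed
  have notN': "y \<otimes> inv x \<notin> N" if "y \<in> C" "x \<in> carrier G" "x \<notin> C" for x y
  proof
    assume yx: "y \<otimes> inv x \<in> N"
    have yc: "y \<in> carrier G" using that C_def by auto
    have "inv (y \<otimes> inv x) \<in> N" using yx by auto
    moreover have "inv (y \<otimes> inv x) = x \<otimes> inv y" using yc that by (simp add: inv_mult_group)
    ultimately show False using notN[OF that(1) that(2) that(3)] by simp
  qed
  have key: "y \<otimes> inv x \<in> S \<longleftrightarrow> f y \<otimes> inv (f x) \<in> S"
    if xc: "x \<in> carrier G" and yc: "y \<in> carrier G" for x y
  proof (cases "x \<in> C")
    case xC: True
    show ?thesis
    proof (cases "y \<in> C")
      case True
      have "f y \<otimes> inv (f x) = y \<otimes> t \<otimes> inv (x \<otimes> t)" using xC True xc yc by (simp add: f_def)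
      also have "\<dots> = y \<otimes> (t \<otimes> inv t) \<otimes> inv x" using xc yc tc by (simp add: inv_mult_group m_assoc) (metis inv_closed l_one m_assoc r_inv)
      also have "\<dots> = y \<otimes> inv x" using xc yc tc by simp
      finally show ?thesis by simp
    next
      case False
      have "f y \<otimes> inv (f x) = y \<otimes> inv (x \<otimes> t)" using xC False xc yc by (simp add: f_def)
      also have "\<dots> = y \<otimes> (inv t \<otimes> inv x)" using xc yc tc by (simp add: inv_mult_group m_assoc)
      also have "\<dots> = y \<otimes> (inv x \<otimes> inv t)" using cen[OF itN, of "inv x"] xc by simp
      also have "\<dots> = (y \<otimes> inv x) \<otimes> inv t" using xc yc itc by (simp add: m_assoc)
      finally have eq: "f y \<otimes> inv (f x) = (y \<otimes> inv x) \<otimes> inv t" .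
      have z: "y \<otimes> inv x \<notin> N" using notN[OF xC yc False] .
      have z2: "(y \<otimes> inv x) \<otimes> inv t \<notin> N"
      proof
        assume "(y \<otimes> inv x) \<otimes> inv t \<in> N"
        then have "(y \<otimes> inv x) \<otimes> inv t \<otimes> t \<in> N" using t N.m_closed by auto
        then show False using z xc yc tc by (simp add: m_assoc)
      qed
      show ?thesis
      proof
        assume "y \<otimes> inv x \<in> S" then show "f y \<otimes> inv (f x) \<in> S" using eq clos z by auto
      next
        assume "f y \<otimes> inv (f x) \<in> S"
        then have "(y \<otimes> inv x) \<otimes> inv t \<otimes> t \<in> S" using eq clos z2 by auto
        then show "y \<otimes> inv x \<in> S" using xc yc tc by (simp add: m_assoc)
      qed
    qed
  next
    case xC: False
    show ?thesis
    proof (cases "y \<in> C")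
      case False
      then show ?thesis using xC xc yc by (simp add: f_def)
    next
      case True
      have "f y \<otimes> inv (f x) = y \<otimes> t \<otimes> inv x" using xC True xc yc by (simp add: f_def)
      also have "\<dots> = y \<otimes> (inv x \<otimes> t)" using cen[OF t(1), of "inv x"] xc yc tc by (simp add: m_assoc)
      also have "\<dots> = (y \<otimes> inv x) \<otimes> t" using xc yc tc by (simp add: m_assoc)
      finally have eq: "f y \<otimes> inv (f x) = (y \<otimes> inv x) \<otimes> t" .
      have z: "y \<otimes> inv x \<notin> N" using notN'[OF True xc xC] .
      have z2: "(y \<otimes> inv x) \<otimes> t \<notin> N"
      proof
        assume "(y \<otimes> inv x) \<otimes> t \<in> N"
        then have "(y \<otimes> inv x) \<otimes> t \<otimes> inv t \<in> N" using itN N.m_closed by auto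
        then show False using z xc yc tc by (simp add: m_assoc)
      qed
      show ?thesis
      proof
        assume "y \<otimes> inv x \<in> S" then show "f y \<otimes> inv (f x) \<in> S" using eq clos z by auto
      next
        assume "f y \<otimes> inv (f x) \<in> S"
        then have "(y \<otimes> inv x) \<otimes> t \<otimes> inv t \<in> S" using eq clos z2 by auto
        then show "y \<otimes> inv x \<in> S" using xc yc tc by (simp add: m_assoc)
      qed
    qed
  qed
  have fcay: "f \<in> cay_aut G S"
    unfolding cay_aut_def
  proof (intro CollectI conjI ballI bij)
    fix x y assume xy: "x \<in> carrier G" "y \<in> carrier G"
    show "(\<exists>s\<in>S. y = s \<otimes> x) = (\<exists>s\<in>S. f y = s \<otimes> f x)"
      using arc_iff[OF xy S] arc_iff[OF fc[OF xy(1)] fc[OF xy(2)] S] key[OF xy] by simp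
  qed
  have one_notC: "\<one> \<notin> C"
  proof
    assume "\<one> \<in> C"
    then have "inv x0 \<in> N" using C_def x0 by auto
    then have "inv (inv x0) \<in> N" by auto
    then show False using x0 by simp
  qed
  have f1: "f \<one> = \<one>" using one_notC by (simp add: f_def)
  have x0C: "x0 \<in> C" using x0 C_def by auto
  have fx0: "f x0 \<noteq> x0"
  proof
    assume "f x0 = x0"
    then have "x0 \<otimes> t = x0 \<otimes> \<one>" using x0C x0 by (simp add: f_def)
    then show False using x0 tc t by (metis l_cancel one_closed)
  qed
  have "f \<notin> right_regular G"
  proof
    assume "f \<in> right_regular G"
    then obtain g where g: "g \<in> carrier G" "f = (\<lambda>x\<in>carrier G. x \<otimes> g)"
      unfolding right_regular_def by blast
    then have "g = \<one>" using f1 by simp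
    then show False using fx0 g x0 by simp
  qed
  then show ?thesis using fcay unfolding is_DRR_def by blast
qed

lemma (in group) not_detecting_from:
  assumes "S \<subseteq> carrier G"
    and pin: "\<And>\<phi> x. \<phi> \<in> auto G \<Longrightarrow> \<phi> ` S = S \<Longrightarrow> x \<in> carrier G \<Longrightarrow> \<phi> x = x"
    and "\<not> is_DRR G S"
  shows "\<not> DRR_detecting G"
proof -
  have "aut_stab G S = {(\<lambda>x\<in>carrier G. x)}"
  proof
    show "{(\<lambda>x\<in>carrier G. x)} \<subseteq> aut_stab G S"
      using id_in_auto assms(1) by (auto simp: aut_stab_def)
    show "aut_stab G S \<subseteq> {(\<lambda>x\<in>carrier G. x)}"
    proof
      fix \<phi> assume "\<phi> \<in> aut_stab G S"
      then have p: "\<phi> \<in> auto G" "\<phi> ` S = S" by (auto simp: aut_stab_def)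
      then have "\<phi> \<in> extensional (carrier G)" by (simp add: auto_def Bij_def)
      then have "\<phi> = (\<lambda>x\<in>carrier G. x)"
        using pin[OF p] by (intro ext) (auto simp: extensional_def)
      then show "\<phi> \<in> {(\<lambda>x\<in>carrier G. x)}" by simp
    qed
  qed
  then show ?thesis using assms unfolding DRR_detecting_def by blast
qed

lemma (in group) auto_pow:
  assumes "\<phi> \<in> auto G" "x \<in> carrier G"
  shows "\<phi> (x [^] (n::nat)) = \<phi> x [^] n"
  using assms hom_nat_pow[of \<phi> G G x n] is_group by (simp add: auto_def)

lemma (in group) auto_inj:
  assumes "\<phi> \<in> auto G" "x \<in> carrier G" "y \<in> carrier G" "\<phi> x = \<phi> y"
  shows "x = y"
  using assms by (auto simp: auto_def Bij_def bij_betw_def inj_on_def)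

lemma (in group) auto_closed:
  assumes "\<phi> \<in> auto G" "x \<in> carrier G"
  shows "\<phi> x \<in> carrier G"
  using assms by (auto simp: auto_def hom_def)

lemma (in group) auto_mult:
  assumes "\<phi> \<in> auto G" "x \<in> carrier G" "y \<in> carrier G"
  shows "\<phi> (x \<otimes> y) = \<phi> x \<otimes> \<phi> y"
  using assms by (auto simp: auto_def hom_def)

lemma (in group) exists_ord_prime:
  assumes fin: "finite (carrier G)" and p: "Factorial_Ring.prime p" and dvd: "p dvd order G"
  shows "\<exists>x\<in>carrier G. ord x = p"
proof -
  obtain m where m: "order G = p ^ 1 * m" using dvd by auto
  obtain H where H: "subgroup H G" "card H = p" using sylow_thm[OF p is_group m fin] by auto
  interpret H: subgroup H G by fact
  have "card H > 1" using H p prime_gt_1_nat by simp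
  then obtain x where x: "x \<in> H" "x \<noteq> \<one>"
    by (metis One_nat_def card.empty card_1_singletonE empty_iff insertI1 less_irrefl
        H.one_closed card_le_Suc0_iff_eq finite_subset H.subset fin not_le)
  have grp: "group (G\<lparr>carrier := H\<rparr>)" using H(1) subgroup_imp_group by blast
  have fH: "finite (carrier (G\<lparr>carrier := H\<rparr>))" using fin finite_subset H.subset by auto
  have "x [^]\<^bsub>G\<lparr>carrier := H\<rparr>\<^esub> (order (G\<lparr>carrier := H\<rparr>)) = \<one>\<^bsub>G\<lparr>carrier := H\<rparr>\<^esub>"
    using group.pow_order_eq_1[OF grp] x by simp
  then have "x [^] p = \<one>" using H x nat_pow_consistent by (simp add: order_def)
  then have "ord x dvd p" using x H.subset pow_eq_id by auto
  moreover have "ord x \<noteq> 1" using x ord_eq_1 H.subset by auto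
  ultimately have "ord x = p" using p unfolding prime_nat_iff by auto
  then show ?thesis using x H.subset by auto
qed

lemma (in group) ord_mult_coprime:
  assumes eq: "x \<otimes> y = y \<otimes> x" and xy: "x \<in> carrier G" "y \<in> carrier G"
    and cop: "coprime (ord x) (ord y)"
  shows "ord (x \<otimes> y) = ord x * ord y"
proof -
  define d where "d = ord (x \<otimes> y)"
  have "(x \<otimes> y) [^] d = \<one>" using xy by (simp add: d_def)
  then have e: "x [^] d \<otimes> y [^] d = \<one>" using pow_mult_distrib[OF eq xy] by simp
  have "x [^] (d * ord y) = \<one>"
  proof -
    have "(x [^] d \<otimes> y [^] d) [^] ord y = \<one>" using e by simp
    moreover have "x [^] d \<otimes> y [^] d = y [^] d \<otimes> x [^] d"
      using e xy by (metis inv_equality l_inv_ex nat_pow_closed r_inv inv_comm)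
    ultimately have "(x [^] d) [^] ord y \<otimes> (y [^] d) [^] ord y = \<one>"
      using pow_mult_distrib[of "x [^] d" "y [^] d" "ord y"] xy by simp
    moreover have "(y [^] d) [^] ord y = \<one>" using xy
      by (metis mult.commute nat_pow_one nat_pow_pow pow_ord_eq_1)
    ultimately show ?thesis using xy by (simp add: nat_pow_pow)
  qed
  then have "ord x dvd d * ord y" using xy pow_eq_id by blast
  then have dx: "ord x dvd d" using cop by (simp add: coprime_dvd_mult_left_iff)
  have "y [^] (d * ord x) = \<one>"
  proof -
    have e2: "y [^] d \<otimes> x [^] d = \<one>" using e xy by (metis inv_comm nat_pow_closed)
    have "(y [^] d \<otimes> x [^] d) [^] ord x = \<one>" using e2 by simp
    moreover have "y [^] d \<otimes> x [^] d = x [^] d \<otimes> y [^] d" using e e2 by simp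
    ultimately have "(y [^] d) [^] ord x \<otimes> (x [^] d) [^] ord x = \<one>"
      using pow_mult_distrib[of "y [^] d" "x [^] d" "ord x"] xy by simp
    moreover have "(x [^] d) [^] ord x = \<one>" using xy
      by (metis mult.commute nat_pow_one nat_pow_pow pow_ord_eq_1)
    ultimately show ?thesis using xy by (simp add: nat_pow_pow)
  qed
  then have "ord y dvd d * ord x" using xy pow_eq_id by blast
  then have dy: "ord y dvd d" using cop by (simp add: coprime_dvd_mult_left_iff coprime_commute)
  have "ord x * ord y dvd d" using dx dy cop by (simp add: divides_mult)
  moreover have "d dvd ord x * ord y" using ord_mul_divides[OF eq xy] by (simp add: d_def)
  ultimately show ?thesis by (simp add: d_def dvd_antisym)
qed

lemma (in comm_group) exists_ord_dvd:
  assumes fin: "finite (carrier G)" and sq: "squarefree (order G)"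
  shows "d dvd order G \<Longrightarrow> \<exists>x\<in>carrier G. ord x = d"
proof (induction d rule: less_induct)
  case (less d)
  show ?case
  proof (cases "d = 1")
    case True then show ?thesis by (intro bexI[of _ \<one>]) auto
  next
    case False
    have "d \<noteq> 0" using less.prems fin order_gt_0_iff_finite by (metis dvd_0_left_iff less_irrefl)
    then obtain p where p: "Factorial_Ring.prime p" "p dvd d" using False prime_factor_nat by blast
    obtain d' where d': "d = p * d'" using p by (auto simp: dvd_def)
    have "d' < d" using d' p \<open>d \<noteq> 0\<close> prime_gt_1_nat by (simp add: d')
    moreover have "d' dvd order G" using less.prems d' by (metis dvd_mult_right)
    ultimately obtain y where y: "y \<in> carrier G" "ord y = d'" using less.IH by blast
    obtain x where x: "x \<in> carrier G" "ord x = p"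
      using exists_ord_prime[OF fin p(1)] p less.prems dvd_trans by blast
    have cop: "coprime p d'"
    proof (rule ccontr)
      assume "\<not> coprime p d'"
      then have "p dvd d'" using p(1) prime_imp_coprime by blast
      then have "p ^ 2 dvd order G" using d' less.prems
        by (metis dvd_trans mult_dvd_mono power2_eq_square dvd_refl)
      then have "p dvd 1" using squarefreeD[OF sq] by blast
      then show False using p by simp
    qed
    have "ord (x \<otimes> y) = p * d'" using ord_mult_coprime[OF m_comm[OF x(1) y(1)] x(1) y(1)] x y cop by simp
    then show ?thesis using x y d' by auto
  qed
qed

lemma (in group) carrier_cyclic:
  assumes fin: "finite (carrier G)" and g: "g \<in> carrier G" "ord g = order G"
  shows "carrier G = {g [^] (k::nat) | k. True}"
proof -
  have sub: "generate G {g} \<subseteq> carrier G" using g generate_incl by blast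
  have "card (generate G {g}) = card (carrier G)" using generate_pow_card[OF g(1)] g(2) by (simp add: order_def)
  then have "generate G {g} = carrier G" using sub fin card_subset_eq by blast
  then show ?thesis using generate_pow_on_finite_carrier[OF fin g(1)] by simp
qed

lemma (in group) auto_one:
  assumes "\<phi> \<in> auto G"
  shows "\<phi> \<one> = \<one>"
proof -
  have "group_hom G G \<phi>" using assms is_group by (simp add: group_hom_def group_hom_axioms_def auto_def)
  then show ?thesis by (rule group_hom.hom_one)
qed

lemma (in comm_group) abelian_case:
  assumes fin: "finite (carrier G)" and g: "g \<in> carrier G" "ord g = order G"
    and n: "order G = p * m" and p: "Factorial_Ring.prime p" and m: "m > 1"
    and cop: "coprime p m"
  shows "\<not> DRR_detecting G"
proof -
  have p1: "p > 1" using p prime_gt_1_nat by blast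
  define u where "u = g [^] m"
  have uc: "u \<in> carrier G" using g by (simp add: u_def)
  have ordu: "ord u = p"
    using ord_pow[OF g(1), of m] g n m p1 by (simp add: u_def)
  have up: "u [^] p = \<one>" using uc ordu by (metis pow_ord_eq_1)
  have u_ne: "u \<noteq> \<one>" using ordu p1 ord_eq_1[OF uc] by auto
  define N where "N = {u [^] (i::nat) | i. True}"
  have Ngen: "generate G {u} = N" using generate_pow_on_finite_carrier[OF fin uc] by (simp add: N_def)
  have uN: "u \<in> N" unfolding N_def using nat_pow_eone[OF uc] by (auto intro!: exI[of _ 1])
  have N: "subgroup N G" using generate_is_subgroup[of "{u}"] uc Ngen by simp
  have powg: "g [^] a = g [^] b \<longleftrightarrow> int (order G) dvd int b - int a" for a b :: nat
    using int_pow_eq[OF g(1), of "int a" "int b"] g(2) by (simp add: int_pow_int)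
  have gN: "g \<notin> N"
  proof
    assume "g \<in> N"
    then obtain i where "g = u [^] (i::nat)" by (auto simp: N_def)
    then have "g [^] (1::nat) = g [^] (m * i)" using g by (simp add: u_def nat_pow_pow)
    then have "int (p * m) dvd int (m * i) - int 1" using powg[of 1 "m * i"] n by (simp only:)
    moreover have "int m dvd int (p * m)" by simp
    ultimately have h: "int m dvd int m * int i - 1" using dvd_trans by (simp only: of_nat_mult of_nat_1) blast
    have "int m dvd int m * int i - (int m * int i - 1)" by (rule dvd_diff[OF _ h]) simp
    then have "int m dvd 1" by simp
    then show False using m by simp
  qed
  define S where "S = insert u {g \<otimes> u [^] (i::nat) | i. True}"
  have Sc: "S \<subseteq> carrier G" using g uc by (auto simp: S_def)
  have invu: "inv u = u [^] (p - 1)"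
  proof -
    have sp: "Suc (p - 1) = p" using p1 by simp
    have "u [^] (p - 1) \<otimes> u = u [^] (Suc (p - 1))" by (simp only: nat_pow_Suc)
    then have "u [^] (p - 1) \<otimes> u = \<one>" using up sp by simp
    then show ?thesis by (rule inv_equality) (use uc in simp_all)
  qed
  have clos: "s \<otimes> u \<in> S \<and> s \<otimes> inv u \<in> S" if sS: "s \<in> S" and sN: "s \<notin> N" for s
  proof -
    have "s \<noteq> u" using sN uN by auto
    then obtain i where i: "s = g \<otimes> u [^] (i::nat)" using sS by (auto simp: S_def)
    have "s \<otimes> u = g \<otimes> u [^] (Suc i)" using i g uc by (simp add: m_assoc del: nat_pow_Suc)
    moreover have "s \<otimes> inv u = g \<otimes> u [^] (i + (p - 1))" using i g uc invu by (simp add: m_assoc nat_pow_mult)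
    moreover have "g \<otimes> u [^] (Suc i) \<in> S" "g \<otimes> u [^] (i + (p - 1)) \<in> S" unfolding S_def by blast+
    ultimately show ?thesis by simp
  qed
  have notDRR: "\<not> is_DRR G S"
    by (rule not_DRR_central[OF N _ g(1) gN _ u_ne Sc clos])
       (use uN subgroup.subset[OF N] in \<open>auto simp: m_comm\<close>)
  have pin: "\<phi> x = x" if phi: "\<phi> \<in> auto G" "\<phi> ` S = S" and x: "x \<in> carrier G" for \<phi> x
  proof -
    have phiS: "\<phi> s \<in> S" if "s \<in> S" for s using phi that by blast
    have gpp: "g [^] p \<noteq> \<one>"
    proof
      assume "g [^] p = \<one>"
      then have "ord g dvd p" using g pow_eq_id by blast
      then have "p * m dvd p" using g n by simp
      then have "p * m \<le> p * 1" using p1 by (simp add: dvd_imp_le)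
      then show False using m p1 by simp
    qed
    have phiu: "\<phi> u = u"
    proof (rule ccontr)
      assume ne: "\<phi> u \<noteq> u"
      have "\<phi> u \<in> S" using phiS S_def by auto
      then obtain i where i: "\<phi> u = g \<otimes> u [^] (i::nat)" using ne by (auto simp: S_def)
      have "\<phi> u [^] p = \<one>" using auto_pow[OF phi(1) uc, of p] up auto_one[OF phi(1)]
        by simp
      moreover have "(g \<otimes> u [^] i) [^] p = g [^] p \<otimes> (u [^] i) [^] p" using g uc
        by (simp add: pow_mult_distrib m_comm)
      moreover have "(u [^] i) [^] p = \<one>"
      proof -
        have "(u [^] i) [^] p = (u [^] p) [^] i" using uc by (simp add: nat_pow_pow mult.commute)
        then show ?thesis using up by simp
      qed
      ultimately show False using i gpp g by simp
    qed
    have phig: "\<phi> g = g"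
    proof -
      have "g \<otimes> u [^] (0::nat) \<in> S" unfolding S_def by blast
      then have "g \<in> S" using g by simp
      then have "\<phi> g \<in> S" using phiS by auto
      moreover have "\<phi> g \<noteq> u"
      proof
        assume "\<phi> g = u"
        then have "g = u" using auto_inj[OF phi(1) g(1) uc] phiu by simp
        then show False using gN uN by simp
      qed
      ultimately obtain i where i: "\<phi> g = g \<otimes> u [^] (i::nat)" by (auto simp: S_def)
      have "\<phi> u = (g \<otimes> u [^] i) [^] m" using auto_pow[OF phi(1) g(1), of m] i by (simp add: u_def)
      also have "\<dots> = u \<otimes> u [^] (i * m)" using g uc by (simp add: pow_mult_distrib m_comm u_def nat_pow_pow mult.assoc)
      finally have "u \<otimes> u [^] (i * m) = u \<otimes> \<one>" using phiu uc by simp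
      then have "u [^] (i * m) = \<one>" using uc by (metis l_cancel nat_pow_closed one_closed)
      then have "p dvd i * m" using uc ordu pow_eq_id by metis
      then have "p dvd i" using cop by (simp add: coprime_dvd_mult_left_iff)
      then have "u [^] i = \<one>" using uc ordu pow_eq_id by metis
      then show ?thesis using i g by simp
    qed
    obtain k where "x = g [^] (k::nat)" using carrier_cyclic[OF fin g] x by auto
    then show ?thesis using auto_pow[OF phi(1) g(1), of k] phig by simp
  qed
  show ?thesis using not_detecting_from[OF Sc _ notDRR] pin by blast
qed

lemma (in group) inv_pow_ord:
  assumes x: "x \<in> carrier G" and o: "ord x > 0"
  shows "inv x = x [^] (ord x - 1)"
proof -
  have sp: "Suc (ord x - 1) = ord x" using o by simp
  have "x [^] (ord x - 1) \<otimes> x = x [^] (Suc (ord x - 1))" by (simp only: nat_pow_Suc)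
  then have "x [^] (ord x - 1) \<otimes> x = \<one>" using sp x by simp
  then show ?thesis by (rule inv_equality) (use x in simp_all)
qed

lemma (in group) dihedral_case:
  assumes abc: "a \<in> carrier G" "b \<in> carrier G" "c \<in> carrier G"
    and orda: "ord a = r" and ordb: "ord b = 2" and ordc: "ord c = q"
    and r: "Factorial_Ring.prime r" "r \<noteq> 2" and q: "Factorial_Ring.prime q" "q \<noteq> 2" "q \<noteq> r"
    and cen: "\<And>x. x \<in> carrier G \<Longrightarrow> c \<otimes> x = x \<otimes> c"
    and gen: "\<And>x. x \<in> carrier G \<Longrightarrow> \<exists>i j k. x = a [^] (i::nat) \<otimes> b [^] (j::nat) \<otimes> c [^] (k::nat)"
  shows "\<not> DRR_detecting G"
proof -
  have q1: "q > 1" using q prime_gt_1_nat by blast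
  have r1: "r > 1" using r prime_gt_1_nat by blast
  have cenk: "c [^] k \<otimes> x = x \<otimes> c [^] k" if x: "x \<in> carrier G" for k :: nat and x
  proof (induction k)
    case 0 then show ?case using x by simp
  next
    case (Suc k)
    have "c [^] Suc k \<otimes> x = c [^] k \<otimes> (c \<otimes> x)" using abc x by (simp add: m_assoc)
    also have "\<dots> = (c [^] k \<otimes> x) \<otimes> c" using abc x cen[OF x] by (simp add: m_assoc)
    also have "\<dots> = x \<otimes> c [^] Suc k" using abc x Suc by (simp add: m_assoc)
    finally show ?case .
  qed
  have powc: "(x \<otimes> c [^] k) [^] n = x [^] n \<otimes> c [^] (k * n)" if x: "x \<in> carrier G" for x and k n :: nat
    using pow_mult_distrib[OF cenk[OF x, symmetric] x] abc x by (simp add: nat_pow_pow)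
  have cpow: "c [^] n = \<one> \<longleftrightarrow> q dvd n" for n :: nat using pow_eq_id[OF abc(3)] ordc by simp
  have apow: "a [^] n = \<one> \<longleftrightarrow> r dvd n" for n :: nat using pow_eq_id[OF abc(1)] orda by simp
  have bpow: "b [^] n = \<one> \<longleftrightarrow> 2 dvd n" for n :: nat using pow_eq_id[OF abc(2)] ordb by simp
  have rq: "\<not> r dvd q" "\<not> q dvd r"
    using primes_dvd_imp_eq[OF r(1) q(1)] primes_dvd_imp_eq[OF q(1) r(1)] q(3) by auto
  have q2: "\<not> q dvd 2" "\<not> r dvd 2"
    using primes_dvd_imp_eq[OF q(1) two_is_prime_nat] primes_dvd_imp_eq[OF r(1) two_is_prime_nat] q(2) r(2) by auto
  have oddq: "\<not> 2 dvd q" "\<not> 2 dvd r"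
    using primes_dvd_imp_eq[OF two_is_prime_nat q(1)] primes_dvd_imp_eq[OF two_is_prime_nat r(1)] q(2) r(2) by auto
  define N where "N = {c [^] (k::nat) | k. True}"
  have Ngen: "generate G {c} = N" using generate_pow_nat[OF abc(3)] ordc q1 by (simp add: N_def)
  have cN: "c \<in> N" unfolding N_def using nat_pow_eone[OF abc(3)] by (auto intro!: exI[of _ 1])
  have N: "subgroup N G" using generate_is_subgroup[of "{c}"] abc Ngen by simp
  have c_ne: "c \<noteq> \<one>" using ordc q1 ord_eq_1[OF abc(3)] by auto
  have bN: "b \<notin> N"
  proof
    assume "b \<in> N"
    then obtain k where k: "b = c [^] (k::nat)" by (auto simp: N_def)
    have "b [^] q = (c [^] q) [^] k" using k abc by (simp add: nat_pow_pow mult.commute)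
    then have "b [^] q = \<one>" using cpow[of q] by simp
    then show False using bpow oddq by simp
  qed
  define S where "S = insert c ({b \<otimes> c [^] (k::nat) | k. True} \<union> {a \<otimes> c [^] (k::nat) | k. True})"
  have Sc: "S \<subseteq> carrier G" using abc by (auto simp: S_def)
  have invc: "inv c = c [^] (q - 1)" using inv_pow_ord[OF abc(3)] ordc q1 by simp
  have clos: "s \<otimes> c \<in> S \<and> s \<otimes> inv c \<in> S" if sS: "s \<in> S" and sN: "s \<notin> N" for s
  proof -
    have "s \<noteq> c" using sN cN by auto
    then obtain x k where xk: "s = x \<otimes> c [^] (k::nat)" "x = a \<or> x = b" using sS by (auto simp: S_def)
    have xc: "x \<in> carrier G" using xk abc by auto
    have "s \<otimes> c = x \<otimes> c [^] (Suc k)" using xk xc abc by (simp add: m_assoc)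
    moreover have "s \<otimes> inv c = x \<otimes> c [^] (k + (q - 1))" using xk xc abc invc by (simp add: m_assoc nat_pow_mult)
    moreover have "x \<otimes> c [^] (Suc k) \<in> S" "x \<otimes> c [^] (k + (q - 1)) \<in> S" using xk(2) unfolding S_def by blast+
    ultimately show ?thesis by simp
  qed
  have notDRR: "\<not> is_DRR G S"
  proof (rule not_DRR_central[OF N _ abc(2) bN cN c_ne Sc clos])
    fix n x assume "n \<in> N" "x \<in> carrier G"
    then show "n \<otimes> x = x \<otimes> n" using cenk by (auto simp: N_def)
  qed
  have xS0: "x \<in> S" if "x = a \<or> x = b" for x
  proof -
    have "x \<otimes> c [^] (0::nat) \<in> S" using that unfolding S_def by blast
    then show ?thesis using that abc by auto
  qed
  have pin: "\<phi> x = x" if phi: "\<phi> \<in> auto G" "\<phi> ` S = S" and x: "x \<in> carrier G" for \<phi> x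
  proof -
    have phiS: "\<phi> s \<in> S" if "s \<in> S" for s using phi that by blast
    have phipow: "\<phi> y [^] n = \<one>" if "y \<in> carrier G" "y [^] n = \<one>" for y and n :: nat
      using auto_pow[OF phi(1) that(1), of n] that auto_one[OF phi(1)] by simp
    have phic: "\<phi> c = c"
    proof -
      have e: "\<phi> c [^] q = \<one>" using phipow[OF abc(3)] cpow by simp
      have "\<phi> c \<in> S" using phiS S_def by auto
      moreover have "\<phi> c \<noteq> b \<otimes> c [^] k" for k :: nat
      proof
        assume "\<phi> c = b \<otimes> c [^] k"
        then have "b [^] q \<otimes> c [^] (k * q) = \<one>" using e powc[OF abc(2)] by simp
        moreover have "c [^] (k * q) = \<one>" using cpow by simp
        ultimately show False using bpow oddq abc by simp
      qed
      moreover have "\<phi> c \<noteq> a \<otimes> c [^] k" for k :: nat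
      proof
        assume "\<phi> c = a \<otimes> c [^] k"
        then have "a [^] q \<otimes> c [^] (k * q) = \<one>" using e powc[OF abc(1)] by simp
        moreover have "c [^] (k * q) = \<one>" using cpow by simp
        ultimately show False using apow rq abc by simp
      qed
      ultimately show ?thesis by (auto simp: S_def)
    qed
    have phib: "\<phi> b = b"
    proof -
      have e: "\<phi> b [^] (2::nat) = \<one>" using phipow[OF abc(2)] bpow by simp
      have "\<phi> b \<in> S" using phiS xS0 by auto
      moreover have "\<phi> b \<noteq> c" using e cpow q2 by auto
      moreover have "\<phi> b \<noteq> a \<otimes> c [^] k" for k :: nat
      proof
        assume "\<phi> b = a \<otimes> c [^] k"
        then have "((a \<otimes> c [^] k) [^] (2::nat)) [^] q = \<one>" using e by simp
        then have "(a \<otimes> c [^] k) [^] (2 * q) = \<one>" using abc by (simp add: nat_pow_pow)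
        then have "a [^] (2 * q) \<otimes> c [^] (k * (2 * q)) = \<one>" using powc[OF abc(1)] by simp
        moreover have "c [^] (k * (2 * q)) = \<one>" using cpow by simp
        ultimately have "r dvd 2 * q" using apow abc by simp
        then show False using rq q2 r by (simp add: prime_dvd_mult_iff)
      qed
      moreover have "\<phi> b = b" if "\<phi> b = b \<otimes> c [^] k" for k :: nat
      proof -
        have "b [^] (2::nat) \<otimes> c [^] (k * 2) = \<one>" using e that powc[OF abc(2)] by simp
        moreover have "b [^] (2::nat) = \<one>" using bpow[of 2] by simp
        ultimately have "c [^] (k * 2) = \<one>" using abc by simp
        then have "q dvd k * 2" using cpow by simp
        then have "q dvd k" using q q2 by (simp add: prime_dvd_mult_iff)
        then show ?thesis using that cpow abc by simp
      qed
      ultimately show ?thesis by (auto simp: S_def)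
    qed
    have phia: "\<phi> a = a"
    proof -
      have e: "\<phi> a [^] r = \<one>" using phipow[OF abc(1)] apow by simp
      have "\<phi> a \<in> S" using phiS xS0 by auto
      moreover have "\<phi> a \<noteq> c" using e cpow rq by auto
      moreover have "\<phi> a \<noteq> b \<otimes> c [^] k" for k :: nat
      proof
        assume "\<phi> a = b \<otimes> c [^] k"
        then have "((b \<otimes> c [^] k) [^] r) [^] q = \<one>" using e by simp
        then have "(b \<otimes> c [^] k) [^] (r * q) = \<one>" using abc by (simp add: nat_pow_pow)
        then have "b [^] (r * q) \<otimes> c [^] (k * (r * q)) = \<one>" using powc[OF abc(2)] by simp
        moreover have "c [^] (k * (r * q)) = \<one>" using cpow by simp
        ultimately have "2 dvd r * q" using bpow abc by simp
        then show False using oddq two_is_prime_nat by (simp add: prime_dvd_mult_iff)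
      qed
      moreover have "\<phi> a = a" if "\<phi> a = a \<otimes> c [^] k" for k :: nat
      proof -
        have "a [^] r \<otimes> c [^] (k * r) = \<one>" using e that powc[OF abc(1)] by simp
        moreover have "a [^] r = \<one>" using apow[of r] by simp
        ultimately have "c [^] (k * r) = \<one>" using abc by simp
        then have "q dvd k * r" using cpow by simp
        then have "q dvd k" using q rq by (simp add: prime_dvd_mult_iff)
        then show ?thesis using that cpow abc by simp
      qed
      ultimately show ?thesis by (auto simp: S_def)
    qed
    obtain i j k where "x = a [^] (i::nat) \<otimes> b [^] (j::nat) \<otimes> c [^] (k::nat)" using gen[OF x] by blast
    then show ?thesis using phia phib phic abc
      by (simp add: auto_mult[OF phi(1)] auto_pow[OF phi(1)])
  qed
  show ?thesis using not_detecting_from[OF Sc _ notDRR] pin by blast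
qed

lemma two_cases_int: "0 \<le> (i::int) \<Longrightarrow> i < 2 \<Longrightarrow> i = 0 \<or> i = 1" by auto

lemma dihedral_group_group:
  assumes r: "r > 0"
  shows "group (dihedral_group r)"
proof (rule groupI)
  fix x y assume "x \<in> carrier (dihedral_group r)" "y \<in> carrier (dihedral_group r)"
  then show "x \<otimes>\<^bsub>dihedral_group r\<^esub> y \<in> carrier (dihedral_group r)"
    using r by (auto simp: dihedral_group_def split: prod.splits)
next
  show "\<one>\<^bsub>dihedral_group r\<^esub> \<in> carrier (dihedral_group r)" using r by (simp add: dihedral_group_def)
next
  fix x y z assume "x \<in> carrier (dihedral_group r)" "y \<in> carrier (dihedral_group r)" "z \<in> carrier (dihedral_group r)"
  then obtain a i b j c k where xyz: "x = (a, i)" "y = (b, j)" "z = (c, k)"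
    and ijk0: "0 \<le> i" "i < 2" "0 \<le> j" "j < 2" "0 \<le> k" "k < 2"
    by (auto simp: dihedral_group_def)
  have ijk: "i = 0 \<or> i = 1" "j = 0 \<or> j = 1" "k = 0 \<or> k = 1" using ijk0 by auto
  show "x \<otimes>\<^bsub>dihedral_group r\<^esub> y \<otimes>\<^bsub>dihedral_group r\<^esub> z =
        x \<otimes>\<^bsub>dihedral_group r\<^esub> (y \<otimes>\<^bsub>dihedral_group r\<^esub> z)"
    using ijk unfolding xyz by (elim disjE) (simp_all add: dihedral_group_def mod_simps algebra_simps)
next
  fix x assume "x \<in> carrier (dihedral_group r)"
  then show "\<one>\<^bsub>dihedral_group r\<^esub> \<otimes>\<^bsub>dihedral_group r\<^esub> x = x"
    by (auto simp: dihedral_group_def)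
next
  fix x assume "x \<in> carrier (dihedral_group r)"
  then obtain a i where x0: "x = (a, i)" "0 \<le> a" "a < int r" "0 \<le> i" "i < 2"
    by (auto simp: dihedral_group_def)
  then have x: "x = (a, i)" "0 \<le> a" "a < int r" "i = 0 \<or> i = 1" by auto
  show "\<exists>y\<in>carrier (dihedral_group r). y \<otimes>\<^bsub>dihedral_group r\<^esub> x = \<one>\<^bsub>dihedral_group r\<^esub>"
  proof (cases "i = 0")
    case True
    show ?thesis
      by (rule bexI[of _ "((- a) mod int r, 0)"]) (use x True r in \<open>simp_all add: dihedral_group_def mod_simps\<close>)
  next
    case False
    then have "i = 1" using x by auto
    then show ?thesis
      by (intro bexI[of _ "(a, 1)"]) (use x r in \<open>simp_all add: dihedral_group_def\<close>)
  qed
qed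

definition G0 :: "nat \<Rightarrow> nat \<Rightarrow> ((int \<times> int) \<times> int) monoid" where
  "G0 r q = DirProd (dihedral_group r) (cyclic_group q)"

lemma G0_group: "r > 0 \<Longrightarrow> group (G0 r q)"
  unfolding G0_def cyclic_group_def by (intro DirProd_group dihedral_group_group) simp_all

lemma G0_carrier: "q > 0 \<Longrightarrow> carrier (G0 r q) = ({0..<int r} \<times> {0..<2}) \<times> {0..<int q}"
  by (simp add: G0_def cyclic_group_def dihedral_group_def carrier_integer_mod_group)

lemma G0_mult: "q > 0 \<Longrightarrow> ((a, i), k) \<otimes>\<^bsub>G0 r q\<^esub> ((b, j), l) =
   (((a + (-1) ^ nat i * b) mod int r, (i + j) mod 2), (k + l) mod int q)"
  by (simp add: G0_def cyclic_group_def dihedral_group_def)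

lemma G0_one: "\<one>\<^bsub>G0 r q\<^esub> = ((0, 0), 0)"
  by (simp add: G0_def cyclic_group_def dihedral_group_def)

lemma G0_powA: "q > 0 \<Longrightarrow> ((1, 0), 0) [^]\<^bsub>G0 r q\<^esub> n = ((int n mod int r, 0), 0)"
proof (induction n)
  case 0 then show ?case by (simp add: G0_one)
next
  case (Suc n)
  then show ?case by (simp add: G0_mult mod_simps add.commute)
qed

lemma G0_powB: "q > 0 \<Longrightarrow> ((0, 1), 0) [^]\<^bsub>G0 r q\<^esub> n = ((0, int n mod 2), 0)"
proof (induction n)
  case 0 then show ?case by (simp add: G0_one)
next
  case (Suc n)
  then show ?case by (simp add: G0_mult mod_simps add.commute)
qed

lemma G0_powC: "q > 0 \<Longrightarrow> ((0, 0), 1) [^]\<^bsub>G0 r q\<^esub> n = ((0, 0), int n mod int q)"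
proof (induction n)
  case 0 then show ?case by (simp add: G0_one)
next
  case (Suc n)
  then show ?case by (simp add: G0_mult mod_simps add.commute)
qed

lemma G0_central: "q > 0 \<Longrightarrow> x \<in> carrier (G0 r q) \<Longrightarrow>
   ((0, 0), 1) \<otimes>\<^bsub>G0 r q\<^esub> x = x \<otimes>\<^bsub>G0 r q\<^esub> ((0, 0), 1)"
  by (auto simp: G0_carrier G0_mult add.commute)

lemma G0_gen: "q > 0 \<Longrightarrow> x \<in> carrier (G0 r q) \<Longrightarrow> \<exists>i j k.
   x = ((1, 0), 0) [^]\<^bsub>G0 r q\<^esub> (i::nat) \<otimes>\<^bsub>G0 r q\<^esub> ((0, 1), 0) [^]\<^bsub>G0 r q\<^esub> (j::nat)
       \<otimes>\<^bsub>G0 r q\<^esub> ((0, 0), 1) [^]\<^bsub>G0 r q\<^esub> (k::nat)"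
proof -
  assume q: "q > 0" and x: "x \<in> carrier (G0 r q)"
  then obtain a i k where xx: "x = ((a, i), k)" "0 \<le> a" "a < int r" "0 \<le> i" "i < 2" "0 \<le> k" "k < int q"
    by (auto simp: G0_carrier)
  have "((1, 0), 0) [^]\<^bsub>G0 r q\<^esub> (nat a) = ((int (nat a) mod int r, 0), 0)" by (rule G0_powA[OF q])
  also have "\<dots> = ((a, 0), 0)" using xx by simp
  finally have 1: "((1, 0), 0) [^]\<^bsub>G0 r q\<^esub> (nat a) = ((a, 0), 0)" .
  have "((0, 1), 0) [^]\<^bsub>G0 r q\<^esub> (nat i) = ((0, int (nat i) mod 2), 0)" by (rule G0_powB[OF q])
  also have "\<dots> = ((0, i), 0)" using xx by simp
  finally have 2: "((0, 1), 0) [^]\<^bsub>G0 r q\<^esub> (nat i) = ((0, i), 0)" .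
  have "((0, 0), 1) [^]\<^bsub>G0 r q\<^esub> (nat k) = ((0, 0), int (nat k) mod int q)" by (rule G0_powC[OF q])
  also have "\<dots> = ((0, 0), k)" using xx by simp
  finally have 3: "((0, 0), 1) [^]\<^bsub>G0 r q\<^esub> (nat k) = ((0, 0), k)" .
  have "x = ((a, 0), 0) \<otimes>\<^bsub>G0 r q\<^esub> ((0, i), 0) \<otimes>\<^bsub>G0 r q\<^esub> ((0, 0), k)"
    using q xx by (simp add: G0_mult)
  then show ?thesis unfolding 1[symmetric] 2[symmetric] 3[symmetric] by blast
qed

lemma iso_ord:
  assumes G: "group G" and H: "group H" and h: "h \<in> iso G H" and x: "x \<in> carrier G"
  shows "group.ord H (h x) = group.ord G x"
proof -
  interpret gh: group_hom G H h using G H h by (simp add: group_hom_def group_hom_axioms_def iso_def)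
  have hx: "h x \<in> carrier H" using x by simp
  have inj: "inj_on h (carrier G)" using h by (simp add: iso_def bij_betw_def)
  have eq: "h x [^]\<^bsub>H\<^esub> n = \<one>\<^bsub>H\<^esub> \<longleftrightarrow> x [^]\<^bsub>G\<^esub> n = \<one>\<^bsub>G\<^esub>" for n :: nat
  proof -
    have "h x [^]\<^bsub>H\<^esub> n = h (x [^]\<^bsub>G\<^esub> n)" using x by (simp add: gh.hom_nat_pow)
    moreover have "h (x [^]\<^bsub>G\<^esub> n) = \<one>\<^bsub>H\<^esub> \<longleftrightarrow> x [^]\<^bsub>G\<^esub> n = \<one>\<^bsub>G\<^esub>"
      using inj x gh.hom_one by (metis G group.is_monoid inj_on_eq_iff monoid.nat_pow_closed monoid.one_closed)
    ultimately show ?thesis by simp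
  qed
  show ?thesis
    using group.ord_unique[OF H hx] eq group.pow_eq_id[OF G x] by simp
qed

theorem corollary4p6:
  fixes R :: "('a, 'b) monoid_scheme"
  assumes "group R" and "finite (carrier R)" and "squarefree (order R)"
    and "(comm_group R \<and> order R > 1 \<and> \<not> Factorial_Ring.prime (order R))
         \<or> (\<exists>r q::nat. r \<in> {3, 5} \<and> Factorial_Ring.prime q \<and>
              R \<cong> DirProd (dihedral_group r) (cyclic_group q))"
  shows "\<not> DRR_detecting R"
  using assms(4)
proof
  assume A: "comm_group R \<and> order R > 1 \<and> \<not> Factorial_Ring.prime (order R)"
  interpret comm_group R using A by simp
  define n where "n = order R"
  have n1: "n > 1" using A n_def by simp
  obtain p where p: "Factorial_Ring.prime p" "p dvd n" using n1 prime_factor_nat[of n] by auto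
  define m where "m = n div p"
  have nm: "n = p * m" using p m_def by simp
  have m1: "m > 1"
  proof -
    have "m \<noteq> 0" using nm n1 by (metis mult_0_right not_less_zero)
    moreover have "m \<noteq> 1" using nm A p n_def by auto
    ultimately show ?thesis by simp
  qed
  have cop: "coprime p m"
  proof (rule ccontr)
    assume "\<not> coprime p m"
    then have "p dvd m" using p(1) prime_imp_coprime by blast
    then have "p ^ 2 dvd n" using nm by (simp add: power2_eq_square)
    then have "p dvd 1" using squarefreeD[OF assms(3)] n_def by blast
    then show False using p by simp
  qed
  obtain g where g: "g \<in> carrier R" "ord g = order R"
    using exists_ord_dvd[OF assms(2) assms(3), of "order R"] by auto
  show ?thesis by (rule abelian_case[OF assms(2) g _ p(1) m1 cop]) (use nm n_def in simp)
next
  assume "\<exists>r q::nat. r \<in> {3, 5} \<and> Factorial_Ring.prime q \<and>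
              R \<cong> DirProd (dihedral_group r) (cyclic_group q)"
  then obtain r q where rq: "r \<in> {3, 5}" "Factorial_Ring.prime q" "R \<cong> G0 r q"
    by (auto simp: G0_def)
  interpret R: group R by fact
  have r0: "r > 1" using rq by auto
  have q0: "q > 1" using rq prime_gt_1_nat by blast
  have p3: "Factorial_Ring.prime (3::nat)" by simp
  have p5: "Factorial_Ring.prime (5::nat)" by simp
  have rprime: "Factorial_Ring.prime r" using rq(1) p3 p5 by auto
  have HG: "group (G0 r q)" using G0_group r0 by simp
  obtain h0 where h0: "h0 \<in> iso R (G0 r q)" using rq(3) by (auto simp: is_iso_def)
  define h where "h = inv_into (carrier R) h0"
  have h: "h \<in> iso (G0 r q) R" using R.iso_set_sym[OF h0] by (simp add: h_def)
  interpret gh: group_hom "G0 r q" R h using HG h by (simp add: group_hom_def group_hom_axioms_def iso_def assms(1))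
  have card: "order R = r * 2 * q"
  proof -
    have "order R = card (carrier (G0 r q))" using iso_same_card[OF rq(3)] by (simp add: order_def)
    also have "\<dots> = r * 2 * q" using q0 by (simp add: G0_carrier card_cartesian_product)
    finally show ?thesis .
  qed
  have q2: "q \<noteq> 2"
  proof
    assume "q = 2"
    then have "2 ^ 2 dvd order R" using card by (simp add: power2_eq_square)
    then have "(2::nat) dvd 1" using squarefreeD[OF assms(3)] by blast
    then show False by simp
  qed
  have qr: "q \<noteq> r"
  proof
    assume "q = r"
    then have "r ^ 2 dvd order R" using card by (simp add: power2_eq_square)
    then have "r dvd 1" using squarefreeD[OF assms(3)] by blast
    then show False using r0 by simp
  qed
  define A where "A = (((1::int), (0::int)), (0::int))"
  define B where "B = (((0::int), (1::int)), (0::int))"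
  define C where "C = (((0::int), (0::int)), (1::int))"
  have ABC: "A \<in> carrier (G0 r q)" "B \<in> carrier (G0 r q)" "C \<in> carrier (G0 r q)"
    using r0 q0 by (auto simp: G0_carrier A_def B_def C_def)
  have "A [^]\<^bsub>G0 r q\<^esub> n = \<one>\<^bsub>G0 r q\<^esub> \<longleftrightarrow> r dvd n" for n :: nat
    using G0_powA[of q r n] q0 r0 by (simp add: A_def G0_one mod_eq_0_iff_dvd)
  then have ordA: "group.ord (G0 r q) A = r"
    by (subst group.ord_unique[OF HG ABC(1)]) simp
  have "B [^]\<^bsub>G0 r q\<^esub> n = \<one>\<^bsub>G0 r q\<^esub> \<longleftrightarrow> 2 dvd n" for n :: nat
    using G0_powB[of q r n] q0 r0 by (simp add: B_def G0_one mod_eq_0_iff_dvd)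
  then have ordB: "group.ord (G0 r q) B = 2"
    by (subst group.ord_unique[OF HG ABC(2)]) simp
  have "C [^]\<^bsub>G0 r q\<^esub> n = \<one>\<^bsub>G0 r q\<^esub> \<longleftrightarrow> q dvd n" for n :: nat
    using G0_powC[of q r n] q0 r0 by (simp add: C_def G0_one mod_eq_0_iff_dvd)
  then have ordC: "group.ord (G0 r q) C = q"
    by (subst group.ord_unique[OF HG ABC(3)]) simp
  have surj: "\<exists>z\<in>carrier (G0 r q). x = h z" if "x \<in> carrier R" for x
    using h that by (auto simp: iso_def bij_betw_def)
  show ?thesis
  proof (rule R.dihedral_case[of "h A" "h B" "h C" r q])
    show "h A \<in> carrier R" "h B \<in> carrier R" "h C \<in> carrier R" using ABC by auto
    show "R.ord (h A) = r" using iso_ord[OF HG assms(1) h ABC(1)] ordA by simp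
    show "R.ord (h B) = 2" using iso_ord[OF HG assms(1) h ABC(2)] ordB by simp
    show "R.ord (h C) = q" using iso_ord[OF HG assms(1) h ABC(3)] ordC by simp
    show "Factorial_Ring.prime r" by fact
    show "r \<noteq> 2" using rq by auto
    show "Factorial_Ring.prime q" "q \<noteq> 2" "q \<noteq> r" using rq q2 qr by auto
  next
    fix x assume "x \<in> carrier R"
    then obtain z where z: "z \<in> carrier (G0 r q)" "x = h z" using surj by blast
    have "h C \<otimes>\<^bsub>R\<^esub> h z = h (C \<otimes>\<^bsub>G0 r q\<^esub> z)" using z ABC by simp
    also have "\<dots> = h (z \<otimes>\<^bsub>G0 r q\<^esub> C)" using G0_central[of q z r] q0 z by (simp add: C_def)
    also have "\<dots> = h z \<otimes>\<^bsub>R\<^esub> h C" using z ABC by simp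
    finally show "h C \<otimes>\<^bsub>R\<^esub> x = x \<otimes>\<^bsub>R\<^esub> h C" using z by simp
  next
    fix x assume "x \<in> carrier R"
    then obtain z where z: "z \<in> carrier (G0 r q)" "x = h z" using surj by blast
    obtain i j k where ijk: "z = A [^]\<^bsub>G0 r q\<^esub> (i::nat) \<otimes>\<^bsub>G0 r q\<^esub> B [^]\<^bsub>G0 r q\<^esub> (j::nat)
       \<otimes>\<^bsub>G0 r q\<^esub> C [^]\<^bsub>G0 r q\<^esub> (k::nat)"
      using G0_gen[of q z r] q0 z unfolding A_def B_def C_def by blast
    have "x = h A [^]\<^bsub>R\<^esub> i \<otimes>\<^bsub>R\<^esub> h B [^]\<^bsub>R\<^esub> j \<otimes>\<^bsub>R\<^esub> h C [^]\<^bsub>R\<^esub> k"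
      using z ijk ABC HG by (simp add: gh.hom_nat_pow group.is_monoid monoid.nat_pow_closed monoid.m_closed)
    then show "\<exists>i j k. x = h A [^]\<^bsub>R\<^esub> (i::nat) \<otimes>\<^bsub>R\<^esub> h B [^]\<^bsub>R\<^esub> (j::nat) \<otimes>\<^bsub>R\<^esub> h C [^]\<^bsub>R\<^esub> (k::nat)"
      by blast
  qed
qed

end
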